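(* Let $C\in\mathbb{R}^{m\times n}$ with $\operatorname{rank}(C)=c$ and $M\in\mathcal{M}_{m\times n}(\mathbb{R})$ with $\operatorname{rank}(M)=k$, and suppose $C=M+\sum_{i=1}^{c-k}\mathbf{r}_i\mathbf{c}_i^\mathsf{T}$ for some $\mathbf{r}_i\in\mathbb{R}^m$, $\mathbf{c}_i\in\mathbb{R}^n$. Then: (1) If $k=2$, then $\mathbf{1}_m\in\operatorname{span}(C)$ and $\mathbf{1}_n\in\operatorname{span}(C^\mathsf{T})$; moreover every $\mathbf{x}\in\mathbb{R}^n$ with $C\mathbf{x}=\mathbf{1}_m$ satisfies $\mathbf{1}_n^\mathsf{T}\mathbf{x}=0$, and every $\mathbf{y}\in\mathbb{R}^m$ with $C^\mathsf{T}\mathbf{y}=\mathbf{1}_n$ satisfies $\mathbf{1}_m^\mathsf{T}\mathbf{y}=0$. (2) If $k=1$, then $\mathbf{1}_m\in\operatorname{span}(C)$ or $\mathbf{1}_n\in\operatorname{span}(C^\mathsf{T})$ (or both).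
   Context: $\mathbf{1}_k$ is the all-ones vector of length $k$. $\operatorname{span}(C)$ denotes the column space of $C$. $\mathcal{M}_{m\times n}(\mathbb{R})=\{M\in\mathbb{R}^{m\times n}: M=\mathbf{1}_m\mathbf{u}^\mathsf{T}+\mathbf{v}\mathbf{1}_n^\mathsf{T}\text{ for some }\mathbf{u}\in\mathbb{R}^n,\mathbf{v}\in\mathbb{R}^m\}$. *)

theory Defs
  imports "HOL-Analysis.Analysis"
begin

text \<open>The all-ones vector.\<close>
definition ones :: "real^'k" where "ones = (\<chi> i. 1)"

text \<open>Rank-one matrix r c^T.\<close>
definition outer :: "real^'m \<Rightarrow> real^'n \<Rightarrow> real^'n^'m" where
  "outer r c = (\<chi> i j. r $ i * c $ j)"

text \<open>The set M_{m x n}(R) = { 1_m u^T + v 1_n^T }.\<close>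
definition Mset :: "(real^'n^'m) set" where
  "Mset = {M. \<exists>(u::real^'n) (v::real^'m). M = outer ones u + outer v ones}"

end

theory Submission
  imports Defs
begin
lemma sub_range: fixes A :: "real^'n^'m" shows "subspace (range ((*v) A))"
  unfolding subspace_def
proof (intro conjI ballI allI)
  show "0 \<in> range ((*v) A)" by (metis matrix_vector_mult_0_right rangeI)
  fix x y assume "x \<in> range ((*v) A)" "y \<in> range ((*v) A)"
  then obtain a b where "x = A *v a" "y = A *v b" by auto
  then show "x + y \<in> range ((*v) A)" by (metis matrix_vector_right_distrib rangeI)
next
  fix c :: real and x assume "x \<in> range ((*v) A)"
  then obtain a where "x = A *v a" by auto
  then show "c *\<^sub>R x \<in> range ((*v) A)" by (metis matrix_vector_mult_scaleR rangeI)
qed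
lemma span_cols: fixes A :: "real^'n^'m" shows "span (columns A) = range ((*v) A)"
proof
  show "range ((*v) A) \<subseteq> span (columns A)" using matrix_vector_mult_in_columnspace by blast
  have "columns A \<subseteq> range ((*v) A)" unfolding columns_image_basis[of A] by auto
  then show "span (columns A) \<subseteq> range ((*v) A)"
    by (metis span_minimal sub_range)
qed
lemma outer_mv: "outer a b *v x = (b \<bullet> x) *\<^sub>R a"
  unfolding outer_def by (simp add: matrix_vector_mult_def inner_vec_def vec_eq_iff sum_distrib_left mult_ac)
lemma tr_outer: "transpose (outer a b) = outer b a"
  unfolding outer_def transpose_def by (simp add: vec_eq_iff mult_ac)
lemma sum_outer_mv: "finite I \<Longrightarrow> (\<Sum>i\<in>I. outer (r i) (cc i)) *v x = (\<Sum>i\<in>I. (cc i \<bullet> x) *\<^sub>R r i)"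
  by (induction I rule: finite_induct) (auto simp: matrix_vector_mult_add_rdistrib outer_mv)
lemma dim_sum_outer: fixes r :: "nat \<Rightarrow> real^'m" and cc :: "nat \<Rightarrow> real^'n"
  shows "dim (range ((*v) (\<Sum>i\<in>{1..N}. outer (r i) (cc i)))) \<le> N"
proof -
  have "range ((*v) (\<Sum>i\<in>{1..N}. outer (r i) (cc i))) \<subseteq> span (r ` {1..N})"
    by (auto simp: sum_outer_mv intro!: span_sum span_scale span_base[OF imageI])
  then have "dim (range ((*v) (\<Sum>i\<in>{1..N}. outer (r i) (cc i)))) \<le> card (r ` {1..N})"
    by (intro dim_le_card) auto
  also have "\<dots> \<le> N" using card_image_le[of "{1..N}" r] by simp
  finally show ?thesis .
qed
lemma key:
  fixes C M R :: "real^'n^'m"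
  assumes "rank C = c" "rank M = k" "C = M + R" "dim (range ((*v) R)) \<le> c - k"
  shows "range ((*v) M) \<subseteq> range ((*v) C) \<and> range ((*v) M) \<inter> range ((*v) R) = {0}"
proof -
  define S where "S = range ((*v) M)"
  define T where "T = range ((*v) R)"
  define U where "U = {x + y |x y. x \<in> S \<and> y \<in> T}"
  have sS: "subspace S" "subspace T" unfolding S_def T_def by (auto intro: sub_range)
  have sU: "subspace U" unfolding U_def using sS subspace_sums by blast
  have 0: "0 \<in> S" "0 \<in> T" using sS subspace_0 by auto
  have CU: "range ((*v) C) \<subseteq> U" unfolding U_def S_def T_def
    using assms(3) by (auto simp: matrix_vector_mult_add_rdistrib)
  have dS: "dim S = k" "dim (range ((*v) C)) = c" using assms(1,2) rank_dim_range S_def by metis+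
  have ds: "dim U + dim (S \<inter> T) = dim S + dim T" unfolding U_def using dim_sums_Int sS by blast
  have SU: "S \<subseteq> U" unfolding U_def using 0 by force
  show ?thesis
  proof (cases "dim T = 0")
    case True
    then have "T \<subseteq> {0}" by simp
    then have "R *v x = 0" for x unfolding T_def by auto
    then have "C *v x = M *v x" for x using assms(3) by (simp add: matrix_vector_mult_add_rdistrib)
    then have "range ((*v) C) = S" unfolding S_def by (metis image_cong)
    then show ?thesis using \<open>T \<subseteq> {0}\<close> 0 unfolding S_def T_def by auto
  next
    case False
    have "c \<le> dim U" using dim_subset[OF CU] dS by simp
    moreover have "dim U \<le> k + dim T" using ds dS by linarith
    moreover have dT: "dim T \<le> c - k" using assms(4) T_def by simp
    ultimately have dU: "dim U = c \<and> dim (S \<inter> T) = 0" using ds dS False by arith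
    then have "S \<inter> T \<subseteq> {0}" by simp
    have "range ((*v) C) = U" using subspace_dim_equal[OF sub_range sU CU] dU dS by simp
    then show ?thesis using SU dU 0 unfolding S_def T_def by auto
  qed
qed
lemma tr_add: "transpose (A + B) = transpose A + (transpose B :: 'a::comm_ring_1^_^_)"
  by (simp add: transpose_def vec_eq_iff)
lemma tr_zero: "transpose (0 :: 'a::comm_ring_1^_^_) = 0"
  by (simp add: transpose_def vec_eq_iff)
lemma tr_sum_outer: "finite I \<Longrightarrow> transpose (\<Sum>i\<in>I. outer (r i) (cc i)) = (\<Sum>i\<in>I. outer (cc i) (r i))"
  by (induction I rule: finite_induct) (auto simp: tr_add tr_zero tr_outer)
lemma ones_ne: "(ones :: real^'k) \<noteq> 0"
  by (simp add: ones_def vec_eq_iff)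
lemma ones_sq: "(ones :: real^'k) \<bullet> ones > 0"
  using ones_ne by simp
lemma M_mv: "(outer ones u + outer v ones) *v x = (u \<bullet> x) *\<^sub>R ones + (ones \<bullet> x) *\<^sub>R v"
  by (simp add: matrix_vector_mult_add_rdistrib outer_mv)
lemma rank_outer: "rank (outer a b) \<le> 1"
proof -
  have "range ((*v) (outer a b)) \<subseteq> span {a}" by (auto simp: outer_mv intro: span_scale span_base)
  then have "dim (range ((*v) (outer a b))) \<le> card {a}" by (intro dim_le_card) auto
  then show ?thesis by (simp add: rank_dim_range)
qed
lemma L1: fixes u :: "real^'n"
  assumes "\<forall>a. u \<noteq> a *\<^sub>R ones" shows "\<exists>x. ones \<bullet> x = 0 \<and> u \<bullet> x \<noteq> 0"
proof -
  define a where "a = (u \<bullet> ones) / ((ones::real^'n) \<bullet> ones)"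
  define x where "x = u - a *\<^sub>R ones"
  have nz: "(ones::real^'n) \<bullet> ones \<noteq> 0" using ones_sq[where 'k='n] by linarith
  have e1: "ones \<bullet> x = ones \<bullet> u - a * ((ones::real^'n) \<bullet> ones)" by (simp add: x_def inner_diff_right)
  have e2: "a * ((ones::real^'n) \<bullet> ones) = u \<bullet> ones" unfolding a_def by (metis nz nonzero_divide_eq_eq)
  have o: "ones \<bullet> x = 0" using e1 e2 inner_commute[of u ones] by simp
  have "x \<noteq> 0" using assms unfolding x_def by auto
  then have "x \<bullet> x \<noteq> 0" by simp
  moreover have "x \<bullet> x = u \<bullet> x" using o unfolding x_def
    by (simp add: inner_diff_left inner_commute)
  ultimately show ?thesis using o by auto
qed
lemma outer_ones_scale: "outer ones (a *\<^sub>R ones) + outer v ones = outer (a *\<^sub>R ones + v) ones"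
  by (simp add: outer_def ones_def vec_eq_iff algebra_simps)
lemma outer_ones_scale2: "outer ones u + outer (b *\<^sub>R ones) ones = outer ones (u + b *\<^sub>R ones)"
  by (simp add: outer_def ones_def vec_eq_iff algebra_simps)
lemma L2: fixes u :: "real^'n" and v :: "real^'m"
  assumes "\<forall>a. u \<noteq> a *\<^sub>R ones" shows "ones \<in> range ((*v) (outer ones u + outer v ones))"
proof -
  obtain x where x: "ones \<bullet> x = 0" "u \<bullet> x \<noteq> 0" using L1 assms by blast
  have "(outer ones u + outer v ones) *v ((1 / (u \<bullet> x)) *\<^sub>R x) = ones"
    using x by (simp add: M_mv inner_scaleR_right)
  then show ?thesis by (metis rangeI)
qed
lemma L3: fixes w :: "real^'m" assumes "outer w (ones::real^'n) \<noteq> 0"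
  shows "ones \<in> range ((*v) (transpose (outer w (ones::real^'n))))"
proof -
  have "w \<noteq> 0" using assms by (auto simp: outer_def vec_eq_iff)
  then have "transpose (outer w (ones::real^'n)) *v ((1/(w \<bullet> w)) *\<^sub>R w) = ones"
    by (simp add: tr_outer outer_mv inner_scaleR_right)
  then show ?thesis by (metis rangeI)
qed
lemma P1: fixes u :: "real^'n" and v :: "real^'m"
  assumes "rank (outer ones u + outer v ones) \<ge> 1"
  shows "ones \<in> range ((*v) (outer ones u + outer v ones)) \<or> ones \<in> range ((*v) (transpose (outer ones u + outer v ones)))"
proof (cases "\<forall>a. u \<noteq> a *\<^sub>R ones")
  case True then show ?thesis using L2 by blast
next
  case False
  then obtain a where a: "u = a *\<^sub>R ones" by blast
  have "outer (a *\<^sub>R ones + v) (ones::real^'n) \<noteq> 0"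
  proof
    assume "outer (a *\<^sub>R ones + v) (ones::real^'n) = 0"
    then have "rank (outer ones u + outer v ones) = 0" unfolding a outer_ones_scale[of a v] by simp
    with assms show False by simp
  qed
  then have "ones \<in> range ((*v) (transpose (outer (a *\<^sub>R ones + v) (ones::real^'n))))" by (rule L3)
  then show ?thesis unfolding a outer_ones_scale[of a v] by blast
qed
lemma P2: fixes u :: "real^'n" and v :: "real^'m"
  assumes "rank (outer ones u + outer v ones) = 2"
  shows "ones \<in> range ((*v) (outer ones u + outer v ones)) \<and> (\<forall>x. (outer ones u + outer v ones) *v x = ones \<longrightarrow> ones \<bullet> x = 0)"
proof
  show "ones \<in> range ((*v) (outer ones u + outer v ones))"
  proof (cases "\<forall>a. u \<noteq> a *\<^sub>R ones")
    case True then show ?thesis using L2 by blast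
  next
    case False
    then obtain a where a: "u = a *\<^sub>R ones" by blast
    have "rank (outer ones u + outer v ones) \<le> 1" unfolding a outer_ones_scale[of a v] by (rule rank_outer)
    then show ?thesis using assms by simp
  qed
  show "\<forall>x. (outer ones u + outer v ones) *v x = ones \<longrightarrow> ones \<bullet> x = 0"
  proof (intro allI impI)
    fix x assume h: "(outer ones u + outer v ones) *v x = ones"
    show "ones \<bullet> x = 0"
    proof (rule ccontr)
      assume ne: "ones \<bullet> x \<noteq> 0"
      have "(u \<bullet> x) *\<^sub>R ones + (ones \<bullet> x) *\<^sub>R v = ones" using h by (simp add: M_mv)
      then have "(ones \<bullet> x) *\<^sub>R v = (1 - u \<bullet> x) *\<^sub>R ones" by (simp add: algebra_simps)
      then have eq: "(ones \<bullet> x) *\<^sub>R v = (1 - u \<bullet> x) *\<^sub>R ones" .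
      define b where "b = (1 - u \<bullet> x) / (ones \<bullet> x)"
      have "v = (1 / (ones \<bullet> x)) *\<^sub>R ((ones \<bullet> x) *\<^sub>R v)" using ne by simp
      also have "\<dots> = b *\<^sub>R ones" unfolding eq b_def by simp
      finally have vb: "v = b *\<^sub>R ones" .
      have "rank (outer ones u + outer v ones) \<le> 1" unfolding vb outer_ones_scale2 by (rule rank_outer)
      then show False using assms by simp
    qed
  qed
qed
lemma part2:
  fixes C M R :: "real^'n^'m" and u :: "real^'n" and v :: "real^'m"
  assumes K: "range ((*v) M) \<subseteq> range ((*v) C) \<and> range ((*v) M) \<inter> range ((*v) R) = {0}"
    and CM: "C = M + R" and Mdef: "M = outer ones u + outer v ones" and r2: "rank M = 2"
  shows "ones \<in> range ((*v) C) \<and> (\<forall>x. C *v x = ones \<longrightarrow> ones \<bullet> x = 0)"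
proof -
  have P: "ones \<in> range ((*v) M) \<and> (\<forall>x. M *v x = ones \<longrightarrow> ones \<bullet> x = 0)"
    using P2[of u v] r2 Mdef by simp
  show ?thesis
  proof (intro conjI allI impI)
    show "ones \<in> range ((*v) C)" using P K by blast
    fix x assume h: "C *v x = ones"
    then have h2: "M *v x + R *v x = ones" using CM by (simp add: matrix_vector_mult_add_rdistrib)
    have "R *v x = ones - M *v x" using h2 by (simp add: algebra_simps)
    moreover have "ones - M *v x \<in> range ((*v) M)"
      using P by (intro subspace_diff[OF sub_range]) auto
    moreover have "R *v x \<in> range ((*v) R)" by simp
    ultimately have "R *v x \<in> range ((*v) M) \<inter> range ((*v) R)" by simp
    then have "R *v x = 0" using K by blast
    then have "M *v x = ones" using h2 by simp
    then show "ones \<bullet> x = 0" using P by blast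
  qed
qed

theorem mainTheorem11:
  fixes C M :: "real^'n^'m" and c k :: nat
    and r :: "nat \<Rightarrow> real^'m" and cc :: "nat \<Rightarrow> real^'n"
  assumes "rank C = c"
    and "M \<in> Mset" and "rank M = k"
    and "C = M + (\<Sum>i\<in>{1..c-k}. outer (r i) (cc i))"
  shows "(k = 2 \<longrightarrow>
            ones \<in> span (columns C) \<and> ones \<in> span (columns (transpose C)) \<and>
            (\<forall>x. C *v x = ones \<longrightarrow> ones \<bullet> x = 0) \<and>
            (\<forall>y. transpose C *v y = ones \<longrightarrow> ones \<bullet> y = 0)) \<and>
         (k = 1 \<longrightarrow>
            ones \<in> span (columns C) \<or> ones \<in> span (columns (transpose C)))"
proof -
  obtain u v where Mdef: "M = outer ones u + outer v ones" using assms(2) unfolding Mset_def by blast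
  define R where "R = (\<Sum>i\<in>{1..c-k}. outer (r i) (cc i))"
  define R' where "R' = (\<Sum>i\<in>{1..c-k}. outer (cc i) (r i))"
  have CM: "C = M + R" using assms(4) R_def by simp
  have CMt: "transpose C = transpose M + R'" unfolding CM R_def R'_def by (simp add: tr_add tr_sum_outer)
  have Mt: "transpose M = outer ones v + outer u ones" unfolding Mdef by (simp add: tr_add tr_outer add.commute)
  have K1: "range ((*v) M) \<subseteq> range ((*v) C) \<and> range ((*v) M) \<inter> range ((*v) R) = {0}"
    by (rule key[OF assms(1) assms(3) CM]) (unfold R_def, rule dim_sum_outer)
  have K2: "range ((*v) (transpose M)) \<subseteq> range ((*v) (transpose C)) \<and> range ((*v) (transpose M)) \<inter> range ((*v) R') = {0}"
  proof (rule key[OF _ _ CMt])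
    show "rank (transpose C) = c" using assms(1) rank_transpose by metis
    show "rank (transpose M) = k" using assms(3) rank_transpose by metis
    show "dim (range ((*v) R')) \<le> c - k" unfolding R'_def by (rule dim_sum_outer)
  qed
  show ?thesis
  proof (intro conjI impI)
    assume k2: "k = 2"
    have A: "ones \<in> range ((*v) C) \<and> (\<forall>x. C *v x = ones \<longrightarrow> ones \<bullet> x = 0)"
      by (rule part2[OF K1 CM Mdef]) (use assms(3) k2 in simp)
    have B: "ones \<in> range ((*v) (transpose C)) \<and> (\<forall>x. transpose C *v x = ones \<longrightarrow> ones \<bullet> x = 0)"
      by (rule part2[OF K2 CMt Mt]) (use assms(3) k2 in \<open>simp add: rank_transpose\<close>)
    show "ones \<in> span (columns C)" using A span_cols[of C] by simp
    show "ones \<in> span (columns (transpose C))" using B span_cols[of "transpose C"] by simp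
    show "\<forall>x. C *v x = ones \<longrightarrow> ones \<bullet> x = 0" using A by blast
    show "\<forall>y. transpose C *v y = ones \<longrightarrow> ones \<bullet> y = 0" using B by blast
  next
    assume k1: "k = 1"
    have "ones \<in> range ((*v) M) \<or> ones \<in> range ((*v) (transpose M))"
    proof -
      have r1: "1 \<le> rank (outer ones u + outer v ones)" using assms(3) k1 Mdef by (metis order_refl)
      show ?thesis using P1[OF r1] by (simp only: Mdef)
    qed
    moreover have "range ((*v) M) \<subseteq> span (columns C)" using K1 span_cols[of C] by simp
    moreover have "range ((*v) (transpose M)) \<subseteq> span (columns (transpose C))"
      using K2 span_cols[of "transpose C"] by simp
    ultimately show "ones \<in> span (columns C) \<or> ones \<in> span (columns (transpose C))"
      by blast
  qed
qed
end
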